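(* Let $M$ be a compact finite dimensional boundaryless manifold with normalized Riemannian volume $m$, $f:M\to M$ a diffeomorphism, $F$ a physical random perturbation of $f$, and $\{\Lambda_i\}_{i=1}^N$, $N\in\mathbb{N}\cup\{\infty\}$, pairwise disjoint compact sets such that (A) each $\Lambda_i$ is an attractor and $\bigcup_i W^s(\Lambda_i)=M$ up to an $m$-null set, and (B) each $\Lambda_i$ supports an $f$-invariant probability $\mu_i$ which is stochastically stable with respect to $F$. Fix $i\in\{1,\dots,N\}$ and for all small $\epsilon>0$ let $\mu_i^\epsilon$ be the unique probability measure associated to $\Lambda_i$ at noise level $\epsilon$ (see context). Then $m\big(W^s(\Lambda_i)\setminus B(\mu_i^\epsilon)\big)\to0$ as $\epsilon\to0^+$.
   Context: $M$ carries a fixed smooth Riemannian metric with distance $\mathrm{dist}$ and normalized volume $m$. For $r>0$, $B_r=\{x\in\mathbb{R}^n:\|x\|_2<r\}$. Physical random perturbation: a $C^1$ map $F:M\times B_1\to M$, $(x,t)\mapsto f_t(x)$, each $f_t$ a diffeomorphism, such that for some $\epsilon_0\in(0,1)$ and all $\epsilon\in(0,\epsilon_0)$: (I) $f_0=f$; (II) with $\Delta_\epsilon=\{\underline t=(t_j)_{j\ge1}: t_j\in\mathbb{R}^n,\ \|t_j\|_2\le\epsilon\}$ and $f^j(x,\underline t)=f_{t_j}\circ\cdots\circ f_{t_1}(x)$, there are $K\in\mathbb{N}$, $\xi>0$ with $\{f^j(x,\underline t):\underline t\in\Delta_\epsilon\}\supset B(f^j(x),\xi)$ for all $x$ and $j\ge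 K$; (III) with $\nu_\epsilon$ normalized Lebesgue measure on $\overline{B_\epsilon}$ and $\nu_\epsilon^\infty$ the product measure on $\Delta_\epsilon$, for all $x$ and $k\ge K$ the push-forward of $\nu_\epsilon^\infty$ by $\underline t\mapsto f^k(x,\underline t)$ is absolutely continuous w.r.t. $m$. Attractor: a compact $\Lambda$ with $f(\Lambda)=\Lambda$, having an open neighborhood $U$ with $f(\overline U)\subset U$ and $\Lambda=\bigcap_{k\ge1}f^k(\overline U)$, and containing a point with dense forward orbit in $\Lambda$; $W^s(\Lambda)=\{x:\mathrm{dist}(f^k(x),\Lambda)\to0\}$. For an attractor $\Lambda$ there are an open $U\supset\Lambda$ and $\epsilon_0>0$ such that for $\epsilon\in(0,\epsilon_0)$ there is exactly one probability $\mu^\epsilon$ with $\Lambda\subset\operatorname{supp}\mu^\epsilon\subset U$ such that for all $x\in U$, $\nu_\epsilon^\infty$-a.e. $\underline t$ and all continuous $\varphi$, $\frac1n\sum_{j<n}\varphi(f^j(x,\underline t))\to\int\varphi\,d\mu^\epsilon$; for $\Lambda=\Lambda_i$ this is $\mu_i^\epsilon$. $(\Lambda,\mu)$ is stochastically stable if $\mu^\epsilon\to\mu$ weak$^*$ as $\epsilon\to0^+$. Basin of a probability $\mu$: $B(\mu)=\{x\in M: \frac1k\sum_{j=0}^{k-1}\delta_{f^j(x,\underline t)}\to\mu \text{ weak}^* \text{ for } \nu_\epsilon^\infty\text{-a.e. } \underline t\in\Delta_\epsilon\}$. *)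

theory Defs
  imports "HOL-Probability.Probability"
begin

fun dd :: "('a::real_normed_vector \<Rightarrow> 'b::real_normed_vector) \<Rightarrow> 'a list \<Rightarrow> 'a \<Rightarrow> 'b" where
  "dd g [] = g"
| "dd g (v # vs) = (\<lambda>x. vector_derivative (\<lambda>s. dd g vs (x + s *\<^sub>R v)) (at 0))"

definition smooth_on :: "'a::real_normed_vector set \<Rightarrow> ('a \<Rightarrow> 'b::real_normed_vector) \<Rightarrow> bool" where
  "smooth_on U g \<longleftrightarrow> open U \<and>
     (\<forall>vs. continuous_on U (dd g vs) \<and>
        (\<forall>v. \<forall>x\<in>U. ((\<lambda>s. dd g vs (x + s *\<^sub>R v)) has_vector_derivative dd g (v # vs) x) (at 0)))"

definition C1_on :: "'a::real_normed_vector set \<Rightarrow> ('a \<Rightarrow> 'b::real_normed_vector) \<Rightarrow> bool" where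
  "C1_on U h \<longleftrightarrow> (\<exists>h'. (\<forall>x\<in>U. (h has_derivative blinfun_apply (h' x)) (at x)) \<and> continuous_on U h')"

text \<open>A local parametrisation (inverse chart) of M, with parameter domain an open subset of R^d,
  d = CARD('d): a smooth immersion that is a homeomorphism onto an open subset of M.\<close>
definition chart :: "'k::euclidean_space set \<Rightarrow> (real^'d) set \<Rightarrow> (real^'d \<Rightarrow> 'k) \<Rightarrow> bool" where
  "chart M U \<phi> \<longleftrightarrow> open U \<and> smooth_on U \<phi> \<and>
     (\<forall>u\<in>U. \<exists>D. (\<phi> has_derivative D) (at u) \<and> inj D) \<and>
     inj_on \<phi> U \<and> \<phi> ` U \<subseteq> M \<and> openin (top_of_set M) (\<phi> ` U) \<and>
     continuous_on (\<phi> ` U) (inv_into U \<phi>)"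

definition compact_smooth_submanifold :: "'k::euclidean_space set \<Rightarrow> 'd::finite itself \<Rightarrow> bool" where
  "compact_smooth_submanifold M (d::'d itself) \<longleftrightarrow> compact M \<and>
     (\<forall>p\<in>M. \<exists>U (\<phi>::real^'d \<Rightarrow> 'k). chart M U \<phi> \<and> p \<in> \<phi> ` U)"

text \<open>Gram determinant of the derivative of a parametrisation (square of the Riemannian volume density
  of the induced metric).\<close>
definition gram :: "(real^'d \<Rightarrow> 'k::euclidean_space) \<Rightarrow> real^'d \<Rightarrow> real" where
  "gram \<phi> u = det (\<chi> i j. frechet_derivative \<phi> (at u) (axis i 1) \<bullet> frechet_derivative \<phi> (at u) (axis j 1))"

abbreviation Mborel :: "'k::topological_space set \<Rightarrow> 'k measure" where
  "Mborel M \<equiv> restrict_space borel M"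

text \<open>m is the normalized Riemannian volume of M (for the metric induced from the ambient space).\<close>
definition normalized_volume :: "'k::euclidean_space set \<Rightarrow> 'd::finite itself \<Rightarrow> 'k measure \<Rightarrow> bool" where
  "normalized_volume M (d::'d itself) m \<longleftrightarrow> prob_space m \<and> sets m = sets (Mborel M) \<and>
     (\<exists>c>0. \<forall>U (\<phi>::real^'d \<Rightarrow> 'k). chart M U \<phi> \<longrightarrow>
        (\<forall>A\<in>sets borel. A \<subseteq> \<phi> ` U \<longrightarrow>
           emeasure m A = ennreal c * (\<integral>\<^sup>+ u. indicator (U \<inter> \<phi> -` A) u * ennreal (sqrt (gram \<phi> u)) \<partial>lborel)))"

definition C1_map :: "'k::euclidean_space set \<Rightarrow> 'd::finite itself \<Rightarrow> ('k \<Rightarrow> 'k) \<Rightarrow> bool" where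
  "C1_map M (d::'d itself) g \<longleftrightarrow> (\<forall>U (\<phi>::real^'d \<Rightarrow> 'k). chart M U \<phi> \<longrightarrow> C1_on U (g \<circ> \<phi>))"

definition diffeo :: "'k::euclidean_space set \<Rightarrow> 'd::finite itself \<Rightarrow> ('k \<Rightarrow> 'k) \<Rightarrow> bool" where
  "diffeo M d g \<longleftrightarrow> bij_betw g M M \<and> C1_map M d g \<and> C1_map M d (inv_into M g)"

text \<open>f^j(x, t) = f_{t_j} o ... o f_{t_1} (x); the noise sequence is indexed from 0, so that
  step number j+1 uses t j.\<close>
fun itF :: "('k \<Rightarrow> 'n \<Rightarrow> 'k) \<Rightarrow> nat \<Rightarrow> 'k \<Rightarrow> (nat \<Rightarrow> 'n) \<Rightarrow> 'k" where
  "itF F 0 x t = x"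
| "itF F (Suc j) x t = F (itF F j x t) (t j)"

definition nu :: "real \<Rightarrow> 'n::euclidean_space measure" where
  "nu \<epsilon> = restrict_space (uniform_measure lborel (cball 0 \<epsilon>)) (cball 0 \<epsilon>)"

definition noise :: "real \<Rightarrow> (nat \<Rightarrow> 'n::euclidean_space) measure" where
  "noise \<epsilon> = PiM UNIV (\<lambda>_. nu \<epsilon>)"

definition phys_perturbation ::
  "'k::euclidean_space set \<Rightarrow> 'd::finite itself \<Rightarrow> 'k measure \<Rightarrow> ('k \<Rightarrow> 'k) \<Rightarrow> ('k \<Rightarrow> 'n::euclidean_space \<Rightarrow> 'k) \<Rightarrow> bool" where
  "phys_perturbation M (d::'d itself) m f F \<longleftrightarrow>
     (\<forall>x\<in>M. \<forall>t\<in>ball 0 1. F x t \<in> M) \<and>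
     (\<forall>U (\<phi>::real^'d \<Rightarrow> 'k). chart M U \<phi> \<longrightarrow> C1_on (U \<times> ball 0 1) (\<lambda>(u, t). F (\<phi> u) t)) \<and>
     (\<forall>t\<in>ball 0 1. diffeo M d (\<lambda>x. F x t)) \<and>
     (\<exists>\<epsilon>0. 0 < \<epsilon>0 \<and> \<epsilon>0 < 1 \<and>
        (\<forall>x\<in>M. F x 0 = f x) \<and>
        (\<forall>\<epsilon>. 0 < \<epsilon> \<and> \<epsilon> < \<epsilon>0 \<longrightarrow>
           (\<exists>K::nat. \<exists>\<xi>>0.
              (\<forall>x\<in>M. \<forall>j\<ge>K. ball ((f ^^ j) x) \<xi> \<inter> M \<subseteq> {itF F j x t | t. \<forall>l. norm (t l) \<le> \<epsilon>}) \<and>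
              (\<forall>x\<in>M. \<forall>k\<ge>K. absolutely_continuous m (distr (noise \<epsilon>) (Mborel M) (\<lambda>t. itF F k x t))))))"

definition attractor :: "'k::euclidean_space set \<Rightarrow> ('k \<Rightarrow> 'k) \<Rightarrow> 'k set \<Rightarrow> bool" where
  "attractor M f \<Lambda> \<longleftrightarrow> compact \<Lambda> \<and> \<Lambda> \<subseteq> M \<and> f ` \<Lambda> = \<Lambda> \<and>
     (\<exists>U. openin (top_of_set M) U \<and> \<Lambda> \<subseteq> U \<and> f ` closure U \<subseteq> U \<and>
          \<Lambda> = (\<Inter>k\<in>{1..}. (f ^^ k) ` closure U)) \<and>
     (\<exists>x\<in>\<Lambda>. \<Lambda> \<subseteq> closure (range (\<lambda>k. (f ^^ k) x)))"

definition Ws :: "'k::euclidean_space set \<Rightarrow> ('k \<Rightarrow> 'k) \<Rightarrow> 'k set \<Rightarrow> 'k set" where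
  "Ws M f \<Lambda> = {x\<in>M. (\<lambda>k. infdist ((f ^^ k) x) \<Lambda>) \<longlonglongrightarrow> 0}"

definition msupp :: "'k::euclidean_space set \<Rightarrow> 'k measure \<Rightarrow> 'k set" where
  "msupp M \<mu> = {x\<in>M. \<forall>e>0. emeasure \<mu> (ball x e \<inter> M) > 0}"

definition emp_conv :: "'k::euclidean_space set \<Rightarrow> ('k \<Rightarrow> 'n \<Rightarrow> 'k) \<Rightarrow> 'k \<Rightarrow> (nat \<Rightarrow> 'n) \<Rightarrow> 'k measure \<Rightarrow> bool" where
  "emp_conv M F x t \<mu> \<longleftrightarrow> (\<forall>\<phi>::'k \<Rightarrow> real. continuous_on M \<phi> \<longrightarrow>
      (\<lambda>k. (\<Sum>j<k. \<phi> (itF F j x t)) / real k) \<longlonglongrightarrow> (\<integral>y. \<phi> y \<partial>\<mu>))"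

definition basin :: "'k::euclidean_space set \<Rightarrow> ('k \<Rightarrow> 'n::euclidean_space \<Rightarrow> 'k) \<Rightarrow> real \<Rightarrow> 'k measure \<Rightarrow> 'k set" where
  "basin M F \<epsilon> \<mu> = {x\<in>M. AE t in noise \<epsilon>. emp_conv M F x t \<mu>}"

text \<open>mu is the (unique) stationary measure of the attractor Lambda at noise level eps,
  relative to the open neighbourhood U of Lambda.\<close>
definition stat_meas :: "'k::euclidean_space set \<Rightarrow> ('k \<Rightarrow> 'n::euclidean_space \<Rightarrow> 'k) \<Rightarrow> real \<Rightarrow> 'k set \<Rightarrow> 'k set \<Rightarrow> 'k measure \<Rightarrow> bool" where
  "stat_meas M F \<epsilon> \<Lambda> U \<mu> \<longleftrightarrow> prob_space \<mu> \<and> sets \<mu> = sets (Mborel M) \<and>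
     \<Lambda> \<subseteq> msupp M \<mu> \<and> msupp M \<mu> \<subseteq> U \<and>
     (\<forall>x\<in>U. AE t in noise \<epsilon>. emp_conv M F x t \<mu>)"

definition weak_conv_at_right0 :: "'k::euclidean_space set \<Rightarrow> (real \<Rightarrow> 'k measure) \<Rightarrow> 'k measure \<Rightarrow> bool" where
  "weak_conv_at_right0 M \<mu>e \<mu> \<longleftrightarrow> (\<forall>\<phi>::'k \<Rightarrow> real. continuous_on M \<phi> \<longrightarrow>
      ((\<lambda>\<epsilon>. \<integral>y. \<phi> y \<partial>\<mu>e \<epsilon>) \<longlongrightarrow> (\<integral>y. \<phi> y \<partial>\<mu>)) (at_right 0))"

end

theory Submission
  imports Defs "HOL-Library.Countable"
begin


datatype expr = EC rat | EV nat | EA expr expr | EM expr expr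

instance expr :: countable by countable_datatype

definition bl :: "'k::euclidean_space list" where "bl = (SOME l. set l = Basis)"

lemma set_bl: "set (bl :: 'k::euclidean_space list) = Basis"
  unfolding bl_def by (rule someI_ex) (simp add: finite_list)

fun evx :: "expr \<Rightarrow> 'k::euclidean_space \<Rightarrow> real" where
  "evx (EC q) x = of_rat q"
| "evx (EV n) x = x \<bullet> (bl ! n)"
| "evx (EA a b) x = evx a x + evx b x"
| "evx (EM a b) x = evx a x * evx b x"

lemma continuous_on_evx: "continuous_on S (evx e)"
  by (induction e) (auto intro!: continuous_intros)

lemma bounded_on_compact:
  fixes g :: "'a::metric_space \<Rightarrow> real"
  assumes "compact S" "continuous_on S g"
  obtains B where "B \<ge> 0" "\<And>x. x \<in> S \<Longrightarrow> \<bar>g x\<bar> \<le> B"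
proof -
  have "bounded (g ` S)" using assms compact_continuous_image compact_imp_bounded by blast
  then obtain B where "\<forall>y\<in>g ` S. norm y \<le> B" by (auto simp: bounded_iff)
  then show ?thesis using that[of "max B 0"] by force
qed

lemma mult_approx:
  fixes a b c d B1 B2 e :: real
  assumes "\<bar>a\<bar> \<le> B1" "\<bar>b\<bar> \<le> B2" "B1 \<ge> 0" "B2 \<ge> 0" "e > 0"
    "\<bar>b - d\<bar> < min 1 (e / (2 * (B1 + 1)))" "\<bar>a - c\<bar> < e / (2 * (B2 + 2))"
  shows "\<bar>a * b - c * d\<bar> < e"
proof -
  have d: "\<bar>d\<bar> \<le> B2 + 1" using assms by linarith
  have "a * b - c * d = a * (b - d) + d * (a - c)" by algebra
  then have "\<bar>a * b - c * d\<bar> \<le> \<bar>a\<bar> * \<bar>b - d\<bar> + \<bar>d\<bar> * \<bar>a - c\<bar>"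
    by (simp add: abs_mult[symmetric] abs_triangle_ineq)
  also have "\<bar>a\<bar> * \<bar>b - d\<bar> \<le> B1 * (e / (2 * (B1 + 1)))"
    using assms by (intro mult_mono) auto
  also have "B1 * (e / (2 * (B1 + 1))) < e / 2"
    using assms by (simp add: field_simps)
  also have "\<bar>d\<bar> * \<bar>a - c\<bar> \<le> (B2 + 1) * (e / (2 * (B2 + 2)))"
    using assms d by (intro mult_mono) auto
  also have "(B2 + 1) * (e / (2 * (B2 + 2))) < e / 2"
    using assms by (simp add: field_simps)
  finally show ?thesis by simp
qed

lemma dense_evx:
  fixes S :: "'k::euclidean_space set" and g :: "'k \<Rightarrow> real"
  assumes S: "compact S" and g: "continuous_on S g" and e: "e > 0"
  shows "\<exists>a. \<forall>x\<in>S. \<bar>g x - evx a x\<bar> < e"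
proof -
  define R where "R = {g. continuous_on S g \<and> (\<forall>e>0. \<exists>a. \<forall>x\<in>S. \<bar>g x - evx a x\<bar> < e)}"
  interpret function_ring_on R S
  proof
    show "compact S" by fact
    show "continuous_on S f" if "f \<in> R" for f using that by (auto simp: R_def)
    show "(\<lambda>x. f x + h x) \<in> R" if "f \<in> R" "h \<in> R" for f h
    proof -
      have "\<exists>a. \<forall>x\<in>S. \<bar>f x + h x - evx a x\<bar> < e" if "e > 0" for e
      proof -
        have e2: "e/2 > 0" using \<open>e > 0\<close> by simp
        obtain a1 where a1: "\<forall>x\<in>S. \<bar>f x - evx a1 x\<bar> < e/2" using \<open>f \<in> R\<close> e2 unfolding R_def by blast
        obtain a2 where a2: "\<forall>x\<in>S. \<bar>h x - evx a2 x\<bar> < e/2" using \<open>h \<in> R\<close> e2 unfolding R_def by blast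
        have "\<bar>f x + h x - evx (EA a1 a2) x\<bar> < e" if "x \<in> S" for x
          using a1[rule_format, OF that] a2[rule_format, OF that] by (simp only: evx.simps)
        then show ?thesis by blast
      qed
      then show ?thesis using that by (auto simp: R_def intro!: continuous_intros)
    qed
    show "(\<lambda>x. f x * h x) \<in> R" if "f \<in> R" "h \<in> R" for f h
    proof -
      obtain B1 where B1: "B1 \<ge> 0" "\<And>x. x \<in> S \<Longrightarrow> \<bar>f x\<bar> \<le> B1"
        using bounded_on_compact[OF S] \<open>f \<in> R\<close> by (auto simp: R_def)
      obtain B2 where B2: "B2 \<ge> 0" "\<And>x. x \<in> S \<Longrightarrow> \<bar>h x\<bar> \<le> B2"
        using bounded_on_compact[OF S] \<open>h \<in> R\<close> by (auto simp: R_def)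
      have "\<exists>a. \<forall>x\<in>S. \<bar>f x * h x - evx a x\<bar> < e" if "e > 0" for e
      proof -
        have p1: "e / (2 * (B2 + 2)) > 0" using B2 \<open>e > 0\<close> by simp
        have p2: "min 1 (e / (2 * (B1 + 1))) > 0" using B1 \<open>e > 0\<close> by simp
        obtain a1 where a1: "\<forall>x\<in>S. \<bar>f x - evx a1 x\<bar> < e / (2 * (B2 + 2))"
          using \<open>f \<in> R\<close> p1 unfolding R_def by blast
        obtain a2 where a2: "\<forall>x\<in>S. \<bar>h x - evx a2 x\<bar> < min 1 (e / (2 * (B1 + 1)))"
          using \<open>h \<in> R\<close> p2 unfolding R_def by blast
        have "\<bar>f x * h x - evx (EM a1 a2) x\<bar> < e" if "x \<in> S" for x
          unfolding evx.simps
          by (rule mult_approx[OF B1(2)[OF that] B2(2)[OF that] B1(1) B2(1) \<open>e > 0\<close>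
                a2[rule_format, OF that] a1[rule_format, OF that]])
        then show ?thesis by blast
      qed
      then show ?thesis using that by (auto simp: R_def intro!: continuous_intros)
    qed
    show "(\<lambda>_. c) \<in> R" for c
    proof -
      have "\<exists>a. \<forall>x\<in>S. \<bar>c - evx a x\<bar> < e" if "e > 0" for e
      proof -
        obtain q where "q \<in> \<rat>" "c < q" "q < c + e" using Rats_dense_in_real[of c "c + e"] \<open>e > 0\<close> by auto
        then obtain r where "q = of_rat r" by (auto elim: Rats_cases)
        then show ?thesis using \<open>c < q\<close> \<open>q < c + e\<close> by (intro exI[of _ "EC r"]) auto
      qed
      then show ?thesis by (auto simp: R_def)
    qed
    show "\<exists>f\<in>R. f x \<noteq> f y" if "x \<in> S" "y \<in> S" "x \<noteq> y" for x y
    proof -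
      obtain b where b: "b \<in> Basis" "x \<bullet> b \<noteq> y \<bullet> b" using \<open>x \<noteq> y\<close> euclidean_eqI by blast
      then obtain n where n: "n < length (bl :: 'k list)" "bl ! n = b"
        using set_bl[where 'k='k] by (metis in_set_conv_nth)
      have "evx (EV n) \<in> R" unfolding R_def
        using continuous_on_evx[of S "EV n"] by (auto intro!: exI[of _ "EV n"])
      moreover have "evx (EV n) x \<noteq> evx (EV n) y" using b n by simp
      ultimately show ?thesis by blast
    qed
  qed
  have "g \<in> R"
  proof -
    obtain G where G1: "\<And>n. G n \<in> R" and G2: "uniform_limit S G g sequentially"
      using Stone_Weierstrass[OF g] by (auto simp: Pi_iff)
    have "\<exists>a. \<forall>x\<in>S. \<bar>g x - evx a x\<bar> < e" if "e > 0" for e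
    proof -
      have e2: "e/2 > 0" using \<open>e > 0\<close> by simp
      have "eventually (\<lambda>n. \<forall>x\<in>S. dist (G n x) (g x) < e/2) sequentially"
        using G2 e2 unfolding uniform_limit_iff by blast
      then obtain N where "\<forall>n\<ge>N. \<forall>x\<in>S. dist (G n x) (g x) < e/2" unfolding eventually_sequentially by blast
      then have n: "\<forall>x\<in>S. dist (G N x) (g x) < e/2" by blast
      have "G N \<in> R" by (rule G1)
      then obtain a where a: "\<forall>x\<in>S. \<bar>G N x - evx a x\<bar> < e/2" using e2 unfolding R_def by blast
      have "\<bar>g x - evx a x\<bar> < e" if "x \<in> S" for x
        using n[rule_format, OF that] a[rule_format, OF that] unfolding dist_real_def by linarith
      then show ?thesis by blast
    qed
    then show ?thesis using g by (auto simp: R_def)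
  qed
  then show ?thesis using e by (auto simp: R_def)
qed


lemma space_Mborel_meas:
  assumes "sets \<mu> = sets (Mborel M)" shows "space \<mu> = M"
  using sets_eq_imp_space_eq[OF assms] by (simp add: space_restrict_space)

lemma meas_cont:
  assumes "sets \<mu> = sets (Mborel M)" "continuous_on M \<phi>"
  shows "(\<phi> :: 'k::topological_space \<Rightarrow> real) \<in> borel_measurable \<mu>"
  using borel_measurable_continuous_on_restrict[OF assms(2)] measurable_cong_sets[OF assms(1) refl] by blast

lemma integrable_cont:
  fixes \<phi> :: "'k::metric_space \<Rightarrow> real"
  assumes "prob_space \<mu>" "sets \<mu> = sets (Mborel M)" "compact M" "continuous_on M \<phi>"
  shows "integrable \<mu> \<phi>"
proof -
  interpret prob_space \<mu> by fact
  obtain B where B: "\<And>x. x \<in> M \<Longrightarrow> \<bar>\<phi> x\<bar> \<le> B" using bounded_on_compact[OF assms(3,4)] by blast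
  show ?thesis
    by (rule integrable_const_bound[where B=B]) (use B space_Mborel_meas[OF assms(2)] meas_cont[OF assms(2,4)] in auto)
qed

lemma emp_conv_iff:
  fixes M :: "'k::euclidean_space set"
  assumes M: "compact M" and P: "prob_space \<mu>" and S: "sets \<mu> = sets (Mborel M)"
    and inM: "\<And>j. itF F j x t \<in> M"
  shows "emp_conv M F x t \<mu> \<longleftrightarrow>
    (\<forall>a. (\<lambda>k. (\<Sum>j<k. evx a (itF F j x t)) / real k) \<longlonglongrightarrow> (\<integral>y. evx a y \<partial>\<mu>))"
proof
  assume "emp_conv M F x t \<mu>"
  then show "\<forall>a. (\<lambda>k. (\<Sum>j<k. evx a (itF F j x t)) / real k) \<longlonglongrightarrow> (\<integral>y. evx a y \<partial>\<mu>)"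
    unfolding emp_conv_def using continuous_on_evx by blast
next
  assume H: "\<forall>a. (\<lambda>k. (\<Sum>j<k. evx a (itF F j x t)) / real k) \<longlonglongrightarrow> (\<integral>y. evx a y \<partial>\<mu>)"
  interpret prob_space \<mu> by fact
  have sp: "space \<mu> = M" by (rule space_Mborel_meas[OF S])
  show "emp_conv M F x t \<mu>" unfolding emp_conv_def
  proof (intro allI impI)
    fix \<phi> :: "'k \<Rightarrow> real" assume \<phi>: "continuous_on M \<phi>"
    show "(\<lambda>k. (\<Sum>j<k. \<phi> (itF F j x t)) / real k) \<longlonglongrightarrow> (\<integral>y. \<phi> y \<partial>\<mu>)"
    proof (rule LIMSEQ_I)
      fix r :: real assume r: "r > 0"
      define e where "e = r / 3"
      have e: "e > 0" using r by (simp add: e_def)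
      obtain a where a: "\<forall>x\<in>M. \<bar>\<phi> x - evx a x\<bar> < e" using dense_evx[OF M \<phi> e] by blast
      have int1: "integrable \<mu> \<phi>" by (rule integrable_cont[OF P S M \<phi>])
      have int2: "integrable \<mu> (evx a)" by (rule integrable_cont[OF P S M continuous_on_evx])
      have I: "\<bar>(\<integral>y. \<phi> y \<partial>\<mu>) - (\<integral>y. evx a y \<partial>\<mu>)\<bar> \<le> e"
      proof -
        have "(\<integral>y. \<phi> y \<partial>\<mu>) - (\<integral>y. evx a y \<partial>\<mu>) = (\<integral>y. \<phi> y - evx a y \<partial>\<mu>)"
          using int1 int2 by simp
        also have "\<bar>\<dots>\<bar> \<le> (\<integral>y. \<bar>\<phi> y - evx a y\<bar> \<partial>\<mu>)"
          by (rule integral_abs_bound)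
        also have "\<dots> \<le> (\<integral>y. e \<partial>\<mu>)"
          using a sp int1 int2 by (intro integral_mono) auto
        also have "\<dots> = e" using prob_space by simp
        finally show ?thesis .
      qed
      from H[rule_format, of a] have "\<forall>\<^sub>F k in sequentially.
          dist ((\<Sum>j<k. evx a (itF F j x t)) / real k) (\<integral>y. evx a y \<partial>\<mu>) < e"
        using e by (rule tendstoD)
      then obtain N where N: "\<And>k. k \<ge> N \<Longrightarrow>
          \<bar>(\<Sum>j<k. evx a (itF F j x t)) / real k - (\<integral>y. evx a y \<partial>\<mu>)\<bar> < e"
        unfolding eventually_sequentially dist_real_def by blast
      have D: "\<bar>(\<Sum>j<k. \<phi> (itF F j x t)) / real k - (\<Sum>j<k. evx a (itF F j x t)) / real k\<bar> < e" for k
      proof (cases "k = 0")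
        case True then show ?thesis using e by simp
      next
        case False
        have "\<bar>(\<Sum>j<k. \<phi> (itF F j x t)) - (\<Sum>j<k. evx a (itF F j x t))\<bar> = \<bar>\<Sum>j<k. \<phi> (itF F j x t) - evx a (itF F j x t)\<bar>"
          by (simp add: sum_subtractf)
        also have "\<dots> \<le> (\<Sum>j<k. \<bar>\<phi> (itF F j x t) - evx a (itF F j x t)\<bar>)" by (rule sum_abs)
        also have "\<dots> < (\<Sum>j<k. e)"
          using False a inM by (intro sum_strict_mono) auto
        also have "\<dots> = real k * e" by simp
        finally have "\<bar>(\<Sum>j<k. \<phi> (itF F j x t)) - (\<Sum>j<k. evx a (itF F j x t))\<bar> < real k * e" .
        then show ?thesis using False
          by (simp add: diff_divide_distrib[symmetric] pos_divide_less_eq mult.commute)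
      qed
      then have "\<bar>(\<Sum>j<k. \<phi> (itF F j x t)) / real k - (\<integral>y. \<phi> y \<partial>\<mu>)\<bar> < r" if "k \<ge> N" for k
        using N[OF that] I D[of k] unfolding e_def by linarith
      then show "\<exists>no. \<forall>k\<ge>no. norm ((\<Sum>j<k. \<phi> (itF F j x t)) / real k - (\<integral>y. \<phi> y \<partial>\<mu>)) < r"
        by auto
    qed
  qed
qed


lemma C1_on_cont: "C1_on U h \<Longrightarrow> continuous_on U h"
  unfolding C1_on_def by (meson continuous_at_imp_continuous_on has_derivative_continuous)

lemma F_cont:
  fixes M :: "'k::euclidean_space set" and d :: "'d::finite itself"
    and F :: "'k \<Rightarrow> 'n::euclidean_space \<Rightarrow> 'k"
  assumes man: "compact_smooth_submanifold M d" and pp: "phys_perturbation M d m f F"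
  shows "continuous_on (M \<times> ball 0 1) (\<lambda>z. F (fst z) (snd z))"
proof -
  have chartC: "\<And>U (\<phi>::real^'d \<Rightarrow> 'k). chart M U \<phi> \<Longrightarrow> C1_on (U \<times> ball 0 1) (\<lambda>(u, t). F (\<phi> u) t)"
    using pp unfolding phys_perturbation_def by blast
  show ?thesis
    unfolding continuous_on_eq_continuous_within
  proof
    fix z assume z: "z \<in> M \<times> ball (0::'n) 1"
    obtain p t0 where zp: "z = (p, t0)" by (cases z)
    have p: "p \<in> M" and t0: "t0 \<in> ball 0 1" using z zp by auto
    obtain U and \<phi> :: "real^'d \<Rightarrow> 'k" where ch: "chart M U \<phi>" and pU: "p \<in> \<phi> ` U"
      using man p unfolding compact_smooth_submanifold_def by blast
    have Uo: "open U" and sub: "\<phi> ` U \<subseteq> M" and Wo: "openin (top_of_set M) (\<phi> ` U)"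
      and ic: "continuous_on (\<phi> ` U) (inv_into U \<phi>)"
      using ch unfolding chart_def by auto
    obtain Ob where O: "open Ob" "\<phi> ` U = M \<inter> Ob" using Wo unfolding openin_open by blast
    define G where "G = (\<lambda>(u, t). F (\<phi> u) t)"
    have Gc: "continuous_on (U \<times> ball 0 1) G" unfolding G_def by (rule C1_on_cont[OF chartC[OF ch]])
    have c1: "continuous_on (\<phi> ` U \<times> ball 0 1) (\<lambda>z. (inv_into U \<phi> (fst z), snd z))"
      by (intro continuous_intros continuous_on_compose2[OF ic]) auto
    have im: "(\<lambda>z. (inv_into U \<phi> (fst z), snd z)) ` (\<phi> ` U \<times> ball 0 1) \<subseteq> U \<times> ball 0 1"
      by (auto intro: inv_into_into)
    have c2: "continuous_on (\<phi> ` U \<times> ball 0 1) (\<lambda>z. G (inv_into U \<phi> (fst z), snd z))"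
      by (rule continuous_on_compose2[OF Gc c1 im])
    have c3: "continuous_on (\<phi> ` U \<times> ball 0 1) (\<lambda>z. F (fst z) (snd z))"
      by (rule continuous_on_eq[OF c2]) (auto simp: G_def f_inv_into_f)
    have zin: "z \<in> \<phi> ` U \<times> ball 0 1" using pU t0 zp by auto
    have "continuous (at z within \<phi> ` U \<times> ball 0 1) (\<lambda>z. F (fst z) (snd z))"
      using c3 zin continuous_on_eq_continuous_within by blast
    moreover have "at z within \<phi> ` U \<times> ball 0 1 = at z within M \<times> ball 0 1"
    proof (rule at_within_nhd[where S="Ob \<times> UNIV"])
      show "z \<in> Ob \<times> UNIV" using zin O by auto
      show "open (Ob \<times> (UNIV :: 'n set))" using O by (simp add: open_Times)
      show "(\<phi> ` U \<times> ball 0 1) \<inter> (Ob \<times> UNIV) - {z} = (M \<times> ball 0 1) \<inter> (Ob \<times> UNIV) - {z}"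
        using O by auto
    qed
    ultimately show "continuous (at z within M \<times> ball 0 1) (\<lambda>z. F (fst z) (snd z))" by simp
  qed
qed


lemma nu_space: "space (nu \<epsilon> :: 'n::euclidean_space measure) = cball 0 \<epsilon>"
  by (simp add: nu_def space_restrict_space)

lemma nu_sets: "sets (nu \<epsilon> :: 'n::euclidean_space measure) = sets (restrict_space borel (cball 0 \<epsilon>))"
  unfolding nu_def by (rule sets_restrict_space_cong) simp

lemma nu_prob:
  assumes "\<epsilon> > 0" shows "prob_space (nu \<epsilon> :: 'n::euclidean_space measure)"
proof -
  have pos: "emeasure lborel (cball (0::'n) \<epsilon>) \<noteq> 0"
  proof -
    have pv: "unit_ball_vol (real DIM('n)) > 0" by simp
    show ?thesis using assms apply (simp add: emeasure_cball) using pv by linarith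
  qed
  have fin: "emeasure lborel (cball (0::'n) \<epsilon>) \<noteq> \<infinity>"
    using emeasure_lborel_cball_finite by (metis less_irrefl)
  show ?thesis unfolding nu_def
    by (rule prob_space_restrict_space) (use emeasure_uniform_measure_1[OF pos fin] in auto)
qed

lemma seq_space: "\<epsilon> > 0 \<Longrightarrow> sequence_space (nu \<epsilon> :: 'n::euclidean_space measure)"
  by (simp add: sequence_space_def product_prob_space_def product_prob_space_axioms_def
      product_sigma_finite_def prob_space_imp_sigma_finite nu_prob)

lemma noise_prob: "\<epsilon> > 0 \<Longrightarrow> prob_space (noise \<epsilon> :: (nat \<Rightarrow> 'n::euclidean_space) measure)"
proof -
  assume "\<epsilon> > 0"
  then interpret sequence_space "nu \<epsilon> :: 'n measure" by (rule seq_space)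
  show ?thesis unfolding noise_def by (rule P.prob_space_axioms)
qed

lemma space_noise: "space (noise \<epsilon> :: (nat \<Rightarrow> 'n::euclidean_space) measure) = {t. \<forall>l. norm (t l) \<le> \<epsilon>}"
  by (auto simp: noise_def space_PiM nu_space)

lemma nu_borel: "(\<lambda>x. x) \<in> measurable (nu \<epsilon> :: 'n::euclidean_space measure) borel"
proof -
  have "(\<lambda>x. x) \<in> measurable (restrict_space borel (cball (0::'n) \<epsilon>)) borel"
    by (rule measurable_restrict_space1) simp
  then show ?thesis using measurable_cong_sets[OF nu_sets refl] by blast
qed

lemma itF_in:
  assumes "\<forall>x\<in>M. \<forall>t\<in>ball 0 1. F x t \<in> M" "x \<in> M" "\<forall>l. norm (t l) < 1"
  shows "itF F j x t \<in> M"
  using assms by (induction j) auto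

lemma itF_meas:
  fixes M :: "'k::euclidean_space set" and F :: "'k \<Rightarrow> 'n::euclidean_space \<Rightarrow> 'k"
  assumes Fc: "continuous_on (M \<times> ball 0 1) (\<lambda>z. F (fst z) (snd z))"
    and FM: "\<forall>x\<in>M. \<forall>t\<in>ball 0 1. F x t \<in> M"
    and e: "\<epsilon> < 1"
  shows "(\<lambda>z. itF F j (fst z) (snd z)) \<in> measurable (Mborel M \<Otimes>\<^sub>M noise \<epsilon>) borel"
proof (induction j)
  case 0
  have "fst \<in> measurable (Mborel M \<Otimes>\<^sub>M noise \<epsilon>) (Mborel M)" by simp
  moreover have "(\<lambda>x. x) \<in> measurable (Mborel M) borel" by (rule measurable_restrict_space1) simp
  ultimately show ?case by (simp add: measurable_compose[of fst _ "Mborel M" "\<lambda>x. x"])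
next
  case (Suc j)
  let ?P = "Mborel M \<Otimes>\<^sub>M (noise \<epsilon> :: (nat \<Rightarrow> 'n) measure)"
  have sp: "z \<in> space ?P \<Longrightarrow> fst z \<in> M \<and> (\<forall>l. norm (snd z l) \<le> \<epsilon>)" for z
    by (auto simp: space_pair_measure space_noise space_restrict_space)
  have c1: "(\<lambda>z. snd z j) \<in> measurable ?P borel"
  proof -
    have "(\<lambda>t. t j) \<in> measurable (noise \<epsilon>) (nu \<epsilon> :: 'n measure)" unfolding noise_def by simp
    then have "(\<lambda>t. t j) \<in> measurable (noise \<epsilon>) (borel :: 'n measure)"
      using measurable_compose[OF _ nu_borel] by blast
    from measurable_compose[OF measurable_snd[of "Mborel M" "noise \<epsilon>"] this] show ?thesis by simp
  qed
  have g: "(\<lambda>z. (itF F j (fst z) (snd z), snd z j)) \<in> measurable ?P borel"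
    unfolding borel_prod[symmetric] using Suc c1 by (rule measurable_Pair)
  have im: "(\<lambda>z. (itF F j (fst z) (snd z), snd z j)) ` space ?P \<subseteq> M \<times> ball 0 1"
  proof
    fix w assume "w \<in> (\<lambda>z. (itF F j (fst z) (snd z), snd z j)) ` space ?P"
    then obtain z where z: "z \<in> space ?P" "w = (itF F j (fst z) (snd z), snd z j)" by blast
    have "\<forall>l. norm (snd z l) < 1" using sp[OF z(1)] e by (meson le_less_trans)
    then show "w \<in> M \<times> ball 0 1" using itF_in[OF FM] sp[OF z(1)] z(2) by auto
  qed
  have g2: "(\<lambda>z. (itF F j (fst z) (snd z), snd z j)) \<in> measurable ?P (restrict_space borel (M \<times> ball 0 1))"
    using im g by (intro measurable_restrict_space2) (auto simp: image_subset_iff_funcset)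
  have "(\<lambda>z. F (fst z) (snd z)) \<in> borel_measurable (restrict_space borel (M \<times> ball 0 1))"
    by (rule borel_measurable_continuous_on_restrict[OF Fc])
  from measurable_compose[OF g2 this] show ?case by simp
qed


definition Eset :: "'k::euclidean_space set \<Rightarrow> ('k \<Rightarrow> 'n::euclidean_space \<Rightarrow> 'k) \<Rightarrow> real \<Rightarrow> 'k measure \<Rightarrow> ('k \<times> (nat \<Rightarrow> 'n)) set" where
  "Eset M F \<epsilon> \<mu> = {z \<in> space (Mborel M \<Otimes>\<^sub>M noise \<epsilon>).
     \<forall>a. (\<lambda>k. (\<Sum>j<k. evx a (itF F j (fst z) (snd z))) / real k) \<longlonglongrightarrow> (\<integral>y. evx a y \<partial>\<mu>)}"

lemma evx_borel[measurable]: "evx a \<in> borel_measurable borel"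
  by (rule borel_measurable_continuous_onI) (rule continuous_on_evx)

lemma E_meas:
  fixes M :: "'k::euclidean_space set" and F :: "'k \<Rightarrow> 'n::euclidean_space \<Rightarrow> 'k"
  assumes Fc: "continuous_on (M \<times> ball 0 1) (\<lambda>z. F (fst z) (snd z))"
    and FM: "\<forall>x\<in>M. \<forall>t\<in>ball 0 1. F x t \<in> M"
    and e: "\<epsilon> < 1"
  shows "Eset M F \<epsilon> \<mu> \<in> sets (Mborel M \<Otimes>\<^sub>M noise \<epsilon>)"
proof -
  let ?P = "Mborel M \<Otimes>\<^sub>M (noise \<epsilon> :: (nat \<Rightarrow> 'n) measure)"
  note itm[measurable] = itF_meas[OF Fc FM e]
  have "Measurable.pred ?P (\<lambda>z. \<forall>a. (\<lambda>k. (\<Sum>j<k. evx a (itF F j (fst z) (snd z))) / real k) \<longlonglongrightarrow> (\<integral>y. evx a y \<partial>\<mu>))"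
    by measurable
  then show ?thesis unfolding Eset_def pred_def .
qed

lemma emp_conv_E:
  fixes M :: "'k::euclidean_space set" and F :: "'k \<Rightarrow> 'n::euclidean_space \<Rightarrow> 'k"
  assumes M: "compact M" and P: "prob_space \<mu>" and S: "sets \<mu> = sets (Mborel M)"
    and FM: "\<forall>x\<in>M. \<forall>t\<in>ball 0 1. F x t \<in> M"
    and e: "\<epsilon> < 1" and x: "x \<in> M" and t: "t \<in> space (noise \<epsilon>)"
  shows "emp_conv M F x t \<mu> \<longleftrightarrow> (x, t) \<in> Eset M F \<epsilon> \<mu>"
proof -
  have t1: "\<forall>l. norm (t l) < 1" using t e by (auto simp: space_noise intro: le_less_trans)
  have inM: "\<And>j. itF F j x t \<in> M" using itF_in[OF FM x t1] .
  have "(x, t) \<in> space (Mborel M \<Otimes>\<^sub>M noise \<epsilon>)" using x t by (simp add: space_pair_measure space_restrict_space)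
  then show ?thesis unfolding emp_conv_iff[OF M P S inM] Eset_def by simp
qed

lemma basin_meas:
  fixes M :: "'k::euclidean_space set" and F :: "'k \<Rightarrow> 'n::euclidean_space \<Rightarrow> 'k"
  assumes M: "compact M" and P: "prob_space \<mu>" and S: "sets \<mu> = sets (Mborel M)"
    and Fc: "continuous_on (M \<times> ball 0 1) (\<lambda>z. F (fst z) (snd z))"
    and FM: "\<forall>x\<in>M. \<forall>t\<in>ball 0 1. F x t \<in> M"
    and e0: "0 < \<epsilon>" and e: "\<epsilon> < 1"
  shows "basin M F \<epsilon> \<mu> \<in> sets (Mborel M)"
proof -
  let ?N = "noise \<epsilon> :: (nat \<Rightarrow> 'n) measure"
  let ?P = "Mborel M \<Otimes>\<^sub>M ?N"
  interpret N: prob_space ?N by (rule noise_prob[OF e0])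
  have Em: "Eset M F \<epsilon> \<mu> \<in> sets ?P" by (rule E_meas[OF Fc FM e])
  define Q where "Q = space ?P - Eset M F \<epsilon> \<mu>"
  have Qm: "Q \<in> sets ?P" unfolding Q_def using Em by auto
  have "basin M F \<epsilon> \<mu> = {x \<in> space (Mborel M). emeasure ?N (Pair x -` Q) = 0}"
  proof (intro set_eqI iffI)
    fix x assume xb: "x \<in> basin M F \<epsilon> \<mu>"
    then have x: "x \<in> M" and ae: "AE t in ?N. emp_conv M F x t \<mu>" by (auto simp: basin_def)
    have eq: "{t \<in> space ?N. \<not> emp_conv M F x t \<mu>} = Pair x -` Q"
      using emp_conv_E[OF M P S FM e x] x unfolding Q_def
      by (auto simp: space_pair_measure space_restrict_space)
    have "Pair x -` Q \<in> sets ?N" using Qm by (rule sets_Pair1)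
    then have "emeasure ?N (Pair x -` Q) = 0" using ae AE_iff_measurable[OF _ eq] by blast
    then show "x \<in> {x \<in> space (Mborel M). emeasure ?N (Pair x -` Q) = 0}"
      using x by (simp add: space_restrict_space)
  next
    fix x assume "x \<in> {x \<in> space (Mborel M). emeasure ?N (Pair x -` Q) = 0}"
    then have x: "x \<in> M" and z: "emeasure ?N (Pair x -` Q) = 0" by (auto simp: space_restrict_space)
    have eq: "{t \<in> space ?N. \<not> emp_conv M F x t \<mu>} = Pair x -` Q"
      using emp_conv_E[OF M P S FM e x] x unfolding Q_def
      by (auto simp: space_pair_measure space_restrict_space)
    have "Pair x -` Q \<in> sets ?N" using Qm by (rule sets_Pair1)
    then have "AE t in ?N. emp_conv M F x t \<mu>" using z AE_iff_measurable[OF _ eq] by blast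
    then show "x \<in> basin M F \<epsilon> \<mu>" using x by (simp add: basin_def)
  qed
  also have "\<dots> \<in> sets (Mborel M)"
  proof -
    have "(\<lambda>x. emeasure ?N (Pair x -` Q)) \<in> borel_measurable (Mborel M)"
      by (rule N.measurable_emeasure_Pair[OF Qm])
    then show ?thesis by measurable
  qed
  finally show ?thesis .
qed

lemma itF_shift: "itF F (Suc j) x (case_nat s \<omega>) = itF F j (F x s) \<omega>"
  by (induction j) auto

lemma emp_conv_shift:
  assumes "emp_conv M F (F x s) \<omega> \<mu>"
  shows "emp_conv M F x (case_nat s \<omega>) \<mu>"
  unfolding emp_conv_def
proof (intro allI impI)
  fix \<phi> :: "'a \<Rightarrow> real" assume \<phi>: "continuous_on M \<phi>"
  let ?a = "\<lambda>k. (\<Sum>j<k. \<phi> (itF F j (F x s) \<omega>)) / real k"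
  have A: "?a \<longlonglongrightarrow> (\<integral>y. \<phi> y \<partial>\<mu>)" using assms \<phi> unfolding emp_conv_def by blast
  have eq: "(\<Sum>j<Suc k. \<phi> (itF F j x (case_nat s \<omega>))) / real (Suc k)
      = \<phi> x / real (Suc k) + ?a k * (real k / real (Suc k))" for k
  proof -
    have "(\<Sum>j<Suc k. \<phi> (itF F j x (case_nat s \<omega>))) = \<phi> x + (\<Sum>j<k. \<phi> (itF F j (F x s) \<omega>))"
      by (simp add: sum.lessThan_Suc_shift itF_shift del: sum.lessThan_Suc itF.simps(2))
    moreover have "?a k * (real k / real (Suc k)) = (\<Sum>j<k. \<phi> (itF F j (F x s) \<omega>)) / real (Suc k)"
      by (cases "k = 0") auto
    ultimately show ?thesis by (simp add: add_divide_distrib)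
  qed
  have l1: "(\<lambda>k. \<phi> x / real (Suc k)) \<longlonglongrightarrow> 0"
    using tendsto_mult_right_zero[OF LIMSEQ_inverse_real_of_nat, of "\<phi> x"] by (simp add: divide_inverse)
  have l2: "(\<lambda>k. real k / real (Suc k)) \<longlonglongrightarrow> 1" by (rule LIMSEQ_n_over_Suc_n)
  have "(\<lambda>k. \<phi> x / real (Suc k) + ?a k * (real k / real (Suc k))) \<longlonglongrightarrow> 0 + (\<integral>y. \<phi> y \<partial>\<mu>) * 1"
    by (intro tendsto_intros l1 l2 A)
  then have "(\<lambda>k. (\<Sum>j<Suc k. \<phi> (itF F j x (case_nat s \<omega>))) / real (Suc k)) \<longlonglongrightarrow> (\<integral>y. \<phi> y \<partial>\<mu>)"
    unfolding eq by simp
  then show "(\<lambda>k. (\<Sum>j<k. \<phi> (itF F j x (case_nat s \<omega>))) / real k) \<longlonglongrightarrow> (\<integral>y. \<phi> y \<partial>\<mu>)"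
    by (rule LIMSEQ_imp_Suc)
qed


lemma markov:
  fixes M :: "'k::euclidean_space set" and F :: "'k \<Rightarrow> 'n::euclidean_space \<Rightarrow> 'k"
  assumes M: "compact M" and P: "prob_space \<mu>" and S: "sets \<mu> = sets (Mborel M)"
    and Fc: "continuous_on (M \<times> ball 0 1) (\<lambda>z. F (fst z) (snd z))"
    and FM: "\<forall>x\<in>M. \<forall>t\<in>ball 0 1. F x t \<in> M"
    and e0: "0 < \<epsilon>" and e: "\<epsilon> < 1" and x: "x \<in> M"
    and H: "\<forall>s\<in>cball 0 \<epsilon>. AE \<omega> in noise \<epsilon>. emp_conv M F (F x s) \<omega> \<mu>"
  shows "AE t in noise \<epsilon>. emp_conv M F x t \<mu>"
proof -
  let ?nu = "nu \<epsilon> :: 'n measure"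
  let ?N = "noise \<epsilon> :: (nat \<Rightarrow> 'n) measure"
  interpret SS: sequence_space ?nu by (rule seq_space[OF e0])
  interpret PP: pair_prob_space ?nu ?N
    by (simp add: pair_prob_space_def pair_sigma_finite_def prob_space_imp_sigma_finite nu_prob noise_prob e0)
  have NS: "?N = SS.S" by (simp add: noise_def)
  have Em: "Eset M F \<epsilon> \<mu> \<in> sets (Mborel M \<Otimes>\<^sub>M ?N)" by (rule E_meas[OF Fc FM e])
  have Qset: "{t \<in> space ?N. emp_conv M F x t \<mu>} = Pair x -` Eset M F \<epsilon> \<mu>"
  proof -
    have "Eset M F \<epsilon> \<mu> \<subseteq> space (Mborel M \<Otimes>\<^sub>M ?N)" unfolding Eset_def by blast
    then show ?thesis using emp_conv_E[OF M P S FM e x]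
      by (auto simp: space_pair_measure)
  qed
  have Qm: "{t \<in> space ?N. emp_conv M F x t \<mu>} \<in> sets ?N"
    unfolding Qset using Em by (rule sets_Pair1)
  have cn: "(\<lambda>(s, \<omega>). case_nat s \<omega>) \<in> measurable (?nu \<Otimes>\<^sub>M ?N) ?N"
    unfolding NS by measurable
  have pm: "{z \<in> space (?nu \<Otimes>\<^sub>M ?N). emp_conv M F x ((\<lambda>(s, \<omega>). case_nat s \<omega>) z) \<mu>} \<in> sets (?nu \<Otimes>\<^sub>M ?N)"
  proof -
    have "(\<lambda>(s, \<omega>). case_nat s \<omega>) -` {t \<in> space ?N. emp_conv M F x t \<mu>} \<inter> space (?nu \<Otimes>\<^sub>M ?N) \<in> sets (?nu \<Otimes>\<^sub>M ?N)"
      by (rule measurable_sets[OF cn Qm])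
    moreover have "(\<lambda>(s, \<omega>). case_nat s \<omega>) -` {t \<in> space ?N. emp_conv M F x t \<mu>} \<inter> space (?nu \<Otimes>\<^sub>M ?N)
       = {z \<in> space (?nu \<Otimes>\<^sub>M ?N). emp_conv M F x ((\<lambda>(s, \<omega>). case_nat s \<omega>) z) \<mu>}"
      using measurable_space[OF cn] by auto
    ultimately show ?thesis by simp
  qed
  have "AE s in ?nu. AE \<omega> in ?N. emp_conv M F x ((\<lambda>(s, \<omega>). case_nat s \<omega>) (s, \<omega>)) \<mu>"
  proof (rule AE_I2)
    fix s assume "s \<in> space ?nu"
    then have "s \<in> cball 0 \<epsilon>" by (simp add: nu_space)
    with H have "AE \<omega> in ?N. emp_conv M F (F x s) \<omega> \<mu>" by blast
    then show "AE \<omega> in ?N. emp_conv M F x ((\<lambda>(s, \<omega>). case_nat s \<omega>) (s, \<omega>)) \<mu>"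
      by eventually_elim (simp add: emp_conv_shift)
  qed
  then have "AE z in ?nu \<Otimes>\<^sub>M ?N. emp_conv M F x ((\<lambda>(s, \<omega>). case_nat s \<omega>) z) \<mu>"
    by (rule PP.AE_pair_measure[OF pm])
  then have A: "AE t in distr (?nu \<Otimes>\<^sub>M ?N) ?N (\<lambda>(s, \<omega>). case_nat s \<omega>). emp_conv M F x t \<mu>"
    by (subst AE_distr_iff[OF cn Qm])
  have D: "distr (?nu \<Otimes>\<^sub>M ?N) ?N (\<lambda>(s, \<omega>). case_nat s \<omega>) = ?N"
    unfolding NS by (rule SS.PiM_iter)
  show ?thesis using A unfolding D .
qed


lemma k_step:
  fixes M :: "'k::euclidean_space set" and F :: "'k \<Rightarrow> 'n::euclidean_space \<Rightarrow> 'k"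
  assumes M: "compact M" and P: "prob_space \<mu>" and S: "sets \<mu> = sets (Mborel M)"
    and Fc: "continuous_on (M \<times> ball 0 1) (\<lambda>z. F (fst z) (snd z))"
    and FM: "\<forall>x\<in>M. \<forall>t\<in>ball 0 1. F x t \<in> M"
    and e0: "0 < \<epsilon>" and e: "\<epsilon> < 1"
    and stat: "\<forall>y\<in>U. AE t in noise \<epsilon>. emp_conv M F y t \<mu>"
  shows "x \<in> M \<Longrightarrow> (\<forall>t. (\<forall>l. norm (t l) \<le> \<epsilon>) \<longrightarrow> itF F k x t \<in> U) \<Longrightarrow>
    AE t in noise \<epsilon>. emp_conv M F x t \<mu>"
proof (induction k arbitrary: x)
  case 0
  have "itF F 0 x (\<lambda>_. 0) \<in> U" using 0(2)[rule_format, of "\<lambda>_. 0"] e0 by simp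
  then have "x \<in> U" by simp
  then show ?case using stat by blast
next
  case (Suc k)
  show ?case
  proof (rule markov[OF M P S Fc FM e0 e Suc(2)], intro ballI)
    fix s :: 'n assume s: "s \<in> cball 0 \<epsilon>"
    have "F x s \<in> M" using FM Suc(2) s e by auto
    moreover have "\<forall>\<omega>. (\<forall>l. norm (\<omega> l) \<le> \<epsilon>) \<longrightarrow> itF F k (F x s) \<omega> \<in> U"
    proof (intro allI impI)
      fix \<omega> :: "nat \<Rightarrow> 'n" assume "\<forall>l. norm (\<omega> l) \<le> \<epsilon>"
      then have "\<forall>l. norm (case_nat s \<omega> l) \<le> \<epsilon>" using s by (auto split: nat.split)
      then have "itF F (Suc k) x (case_nat s \<omega>) \<in> U" using Suc(3) by blast
      then show "itF F k (F x s) \<omega> \<in> U" by (simp only: itF_shift)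
    qed
    ultimately show "AE \<omega> in noise \<epsilon>. emp_conv M F (F x s) \<omega> \<mu>" by (rule Suc.IH)
  qed
qed

lemma close:
  fixes M :: "'k::euclidean_space set" and F :: "'k \<Rightarrow> 'n::euclidean_space \<Rightarrow> 'k"
  assumes M: "compact M"
    and Fc: "continuous_on (M \<times> ball 0 1) (\<lambda>z. F (fst z) (snd z))"
    and FM: "\<forall>x\<in>M. \<forall>t\<in>ball 0 1. F x t \<in> M"
    and f0: "\<forall>x\<in>M. F x 0 = f x"
  shows "\<delta> > 0 \<Longrightarrow> \<exists>\<eta>>0. \<eta> \<le> 1/2 \<and> (\<forall>x\<in>M. \<forall>t. (\<forall>l. norm (t l) \<le> \<eta>) \<longrightarrow> dist (itF F k x t) ((f ^^ k) x) < \<delta>)"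
proof (induction k arbitrary: \<delta>)
  case 0
  then show ?case by (intro exI[of _ "1/2"]) auto
next
  case (Suc k)
  have fM: "x \<in> M \<Longrightarrow> (f ^^ j) x \<in> M" for x j
  proof (induction j)
    case (Suc j) then show ?case using FM f0 by (metis centre_in_ball funpow.simps(2) o_apply zero_less_one)
  qed simp
  let ?K = "M \<times> cball (0::'n) (1/2)"
  have Kc: "compact ?K" using M by (intro compact_Times) auto
  have KS: "?K \<subseteq> M \<times> ball 0 1" by auto
  have "uniformly_continuous_on ?K (\<lambda>z. F (fst z) (snd z))"
    by (rule compact_uniformly_continuous[OF continuous_on_subset[OF Fc KS] Kc])
  then obtain \<gamma> where \<gamma>: "\<gamma> > 0" "\<And>z z'. z \<in> ?K \<Longrightarrow> z' \<in> ?K \<Longrightarrow> dist z' z < \<gamma> \<Longrightarrow>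
      dist (F (fst z') (snd z')) (F (fst z) (snd z)) < \<delta>"
    using Suc.prems unfolding uniformly_continuous_on_def by metis
  obtain \<eta>' where \<eta>': "\<eta>' > 0" "\<eta>' \<le> 1/2"
    "\<forall>x\<in>M. \<forall>t. (\<forall>l. norm (t l) \<le> \<eta>') \<longrightarrow> dist (itF F k x t) ((f ^^ k) x) < \<gamma>/2"
    using Suc.IH[of "\<gamma>/2"] \<gamma>(1) by auto
  define \<eta> where "\<eta> = min \<eta>' (\<gamma>/4)"
  have \<eta>: "\<eta> > 0" "\<eta> \<le> 1/2" using \<eta>' \<gamma> by (auto simp: \<eta>_def)
  show ?case
  proof (intro exI[of _ \<eta>] conjI \<eta> ballI allI impI)
    fix x and t :: "nat \<Rightarrow> 'n" assume x: "x \<in> M" and t: "\<forall>l. norm (t l) \<le> (\<eta>::real)"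
    have t1: "\<forall>l. norm (t l) < 1" proof
      fix l have "norm (t l) \<le> 1/2" using t \<eta> by (meson order.trans)
      then show "norm (t l) < 1" by simp
    qed
    have a: "itF F k x t \<in> M" by (rule itF_in[OF FM x t1])
    have b: "(f ^^ k) x \<in> M" by (rule fM[OF x])
    have tk0: "norm (t k) \<le> \<eta>" using t by blast
    have tk: "norm (t k) \<le> 1/2" "norm (t k) < \<gamma>/2" using tk0 \<eta>' \<gamma>(1) unfolding \<eta>_def by linarith+
    have d1: "dist (itF F k x t) ((f ^^ k) x) < \<gamma>/2" using \<eta>'(3) x t by (auto simp: \<eta>_def)
    have "dist (itF F k x t, t k) ((f ^^ k) x, 0) \<le> dist (itF F k x t) ((f ^^ k) x) + dist (t k) 0"
      unfolding dist_Pair_Pair by (rule order.trans[OF sqrt_sum_squares_le_sum_abs]) simp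
    also have "\<dots> < \<gamma>" using d1 tk by simp
    finally have "dist (F (itF F k x t) (t k)) (F ((f ^^ k) x) 0) < \<delta>"
      using \<gamma>(2)[of "((f ^^ k) x, 0)" "(itF F k x t, t k)"] a b tk by auto
    then show "dist (itF F (Suc k) x t) ((f ^^ Suc k) x) < \<delta>" using f0 b by simp
  qed
qed


theorem lemma4p1:
  fixes M :: "'k::euclidean_space set"
    and d :: "'d::finite itself"
    and m :: "'k measure"
    and f :: "'k \<Rightarrow> 'k"
    and F :: "'k \<Rightarrow> 'n::euclidean_space \<Rightarrow> 'k"
    and I :: "nat set"
    and \<Lambda> :: "nat \<Rightarrow> 'k set"
    and \<mu> :: "nat \<Rightarrow> 'k measure"
    and \<mu>e :: "nat \<Rightarrow> real \<Rightarrow> 'k measure"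
    and i :: nat
  assumes manifold: "compact_smooth_submanifold M d"
    and volume: "normalized_volume M d m"
    and f_diffeo: "diffeo M d f"
    and perturbation: "phys_perturbation M d m f F"
    and disjoint: "disjoint_family_on \<Lambda> I"
    and attractors: "\<forall>j\<in>I. attractor M f (\<Lambda> j)"
    and cover: "\<exists>N\<in>null_sets m. M - (\<Union>j\<in>I. Ws M f (\<Lambda> j)) \<subseteq> N"
    and inv_meas: "\<forall>j\<in>I. prob_space (\<mu> j) \<and> sets (\<mu> j) = sets (Mborel M) \<and>
                      emeasure (\<mu> j) (\<Lambda> j) = 1 \<and> distr (\<mu> j) (Mborel M) f = \<mu> j"
    and stationary: "\<forall>j\<in>I. \<exists>U \<epsilon>1. 0 < \<epsilon>1 \<and> openin (top_of_set M) U \<and> \<Lambda> j \<subseteq> U \<and>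
                      (\<forall>\<epsilon>. 0 < \<epsilon> \<and> \<epsilon> < \<epsilon>1 \<longrightarrow> stat_meas M F \<epsilon> (\<Lambda> j) U (\<mu>e j \<epsilon>))"
    and stoch_stable: "\<forall>j\<in>I. weak_conv_at_right0 M (\<mu>e j) (\<mu> j)"
    and i: "i \<in> I"
  shows "(\<forall>\<^sub>F \<epsilon> in at_right 0. Ws M f (\<Lambda> i) - basin M F \<epsilon> (\<mu>e i \<epsilon>) \<in> sets m) \<and>
         ((\<lambda>\<epsilon>. measure m (Ws M f (\<Lambda> i) - basin M F \<epsilon> (\<mu>e i \<epsilon>))) \<longlongrightarrow> 0) (at_right 0)"
proof -
  let ?L = "\<Lambda> i"
  have Mc: "compact M" using manifold unfolding compact_smooth_submanifold_def by (rule conjunct1)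
  have FM: "\<forall>x\<in>M. \<forall>t\<in>ball 0 1. F x t \<in> M" using perturbation unfolding phys_perturbation_def by (rule conjunct1)
  have f0: "\<forall>x\<in>M. F x 0 = f x" using perturbation unfolding phys_perturbation_def by (elim conjE exE) assumption
  have Fc: "continuous_on (M \<times> ball 0 1) (\<lambda>z. F (fst z) (snd z))" by (rule F_cont[OF manifold perturbation])
  have mprob: "prob_space m" using volume unfolding normalized_volume_def by (rule conjunct1)
  have msets: "sets m = sets (Mborel M)"
    by (rule conjunct1[OF conjunct2[OF volume[unfolded normalized_volume_def]]])
  interpret m: prob_space m by (rule mprob)
  obtain U \<epsilon>1 where \<epsilon>1: "0 < \<epsilon>1" and Uo: "openin (top_of_set M) U" and LU: "?L \<subseteq> U"
    and st: "\<And>\<epsilon>. 0 < \<epsilon> \<Longrightarrow> \<epsilon> < \<epsilon>1 \<Longrightarrow> stat_meas M F \<epsilon> ?L U (\<mu>e i \<epsilon>)"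
  proof -
    from stationary i have "\<exists>U \<epsilon>1. 0 < \<epsilon>1 \<and> openin (top_of_set M) U \<and> ?L \<subseteq> U \<and>
                      (\<forall>\<epsilon>. 0 < \<epsilon> \<and> \<epsilon> < \<epsilon>1 \<longrightarrow> stat_meas M F \<epsilon> ?L U (\<mu>e i \<epsilon>))" by (rule bspec)
    then show ?thesis using that by blast
  qed
  have UM: "U \<subseteq> M" using Uo by (rule openin_imp_subset)
  have att: "attractor M f ?L" using attractors i by (rule bspec)
  have Lc: "compact ?L" using att unfolding attractor_def by (rule conjunct1)
  have "\<exists>x\<in>?L. ?L \<subseteq> closure (range (\<lambda>k. (f ^^ k) x))"
    using att unfolding attractor_def by (elim conjE) assumption
  then have Lne: "?L \<noteq> {}" by blast
  obtain \<delta> where \<delta>: "\<delta> > 0" and \<delta>U: "\<And>y. y \<in> M \<Longrightarrow> infdist y ?L < 2 * \<delta> \<Longrightarrow> y \<in> U"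
  proof -
    obtain Ob where Ob: "open Ob" "U = M \<inter> Ob" using Uo unfolding openin_open by blast
    show ?thesis
    proof (cases "- Ob = {}")
      case True
      then show ?thesis using that[of 1] Ob by auto
    next
      case False
      define s where "s = setdist ?L (- Ob)"
      have s: "s > 0" unfolding s_def using Lc Ob LU False Lne
        by (subst setdist_gt_0_compact_closed) (auto simp: closed_Compl)
      have "y \<in> U" if y: "y \<in> M" "infdist y ?L < 2 * (s/2)" for y
      proof (rule ccontr)
        assume "y \<notin> U"
        then have yO: "y \<in> - Ob" using y Ob by auto
        have "s \<le> infdist y ?L"
          unfolding infdist_notempty[OF Lne]
        proof (rule cINF_greatest[OF Lne])
          fix a assume "a \<in> ?L"
          then have "s \<le> dist a y" unfolding s_def using yO by (rule setdist_le_dist)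
          then show "s \<le> dist y a" by (simp add: dist_commute)
        qed
        then show False using y by simp
      qed
      then show ?thesis using that[of "s/2"] s by auto
    qed
  qed
  have fM: "x \<in> M \<Longrightarrow> (f ^^ j) x \<in> M" for x j
  proof (induction j)
    case (Suc j) then show ?case using FM f0 by (metis centre_in_ball funpow.simps(2) o_apply zero_less_one)
  qed simp
  have fcont: "continuous_on M f"
  proof -
    have "continuous_on M (\<lambda>x. (\<lambda>z. F (fst z) (snd z)) (x, 0::'n))"
      by (rule continuous_on_compose2[OF Fc]) (auto intro!: continuous_intros)
    then show ?thesis by (rule continuous_on_eq) (use f0 in auto)
  qed
  have fmeas: "f \<in> measurable (Mborel M) (Mborel M)"
  proof (rule measurable_restrict_space2)
    show "f \<in> space (Mborel M) \<rightarrow> M" using fM[of _ 1] by (auto simp: space_restrict_space)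
    show "f \<in> borel_measurable (Mborel M)" by (rule borel_measurable_continuous_on_restrict[OF fcont])
  qed
  have fkmeas: "(f ^^ k) \<in> measurable (Mborel M) (Mborel M)" for k
  proof (induction k)
    case 0 then show ?case by simp
  next
    case (Suc k)
    have "(\<lambda>x. f ((f ^^ k) x)) \<in> measurable (Mborel M) (Mborel M)"
      by (rule measurable_compose[OF Suc fmeas])
    then show ?case by (simp add: comp_def)
  qed
  have idm: "(\<lambda>y. infdist y ?L) \<in> borel_measurable (Mborel M)"
    by (rule measurable_restrict_space1) (rule borel_measurable_continuous_onI, intro continuous_intros)
  define g where "g k x = infdist ((f ^^ k) x) ?L" for k x
  have gm[measurable]: "g k \<in> borel_measurable (Mborel M)" for k
    unfolding g_def by (rule measurable_compose[OF fkmeas idm])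
  have spM: "space (Mborel M) = M" by (simp add: space_restrict_space)
  have Wsm: "Ws M f ?L \<in> sets (Mborel M)"
  proof -
    have "Measurable.pred (Mborel M) (\<lambda>x. (\<lambda>k. g k x) \<longlonglongrightarrow> 0)" by measurable
    then show ?thesis unfolding pred_def Ws_def g_def spM .
  qed
  define Good where "Good k \<epsilon> \<longleftrightarrow> (\<forall>x'\<in>M. \<forall>t. (\<forall>l. norm (t l) \<le> \<epsilon>) \<longrightarrow> dist (itF F k x' t) ((f ^^ k) x') < \<delta>)"
    for k and \<epsilon> :: real
  define G where "G \<epsilon> = {x \<in> M. \<exists>k. Good k \<epsilon> \<and> g k x < \<delta>}" for \<epsilon>
  have Gm: "G \<epsilon> \<in> sets (Mborel M)" for \<epsilon>
  proof -
    have "Measurable.pred (Mborel M) (\<lambda>x. \<exists>k. Good k \<epsilon> \<and> g k x < \<delta>)" by measurable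
    then show ?thesis unfolding pred_def G_def spM .
  qed
  have Goodmono: "Good k \<epsilon>" if "\<epsilon> \<le> \<epsilon>'" "Good k \<epsilon>'" for k \<epsilon> \<epsilon>'
    unfolding Good_def
  proof (intro ballI allI impI)
    fix x' and t :: "nat \<Rightarrow> 'n" assume "x' \<in> M" "\<forall>l. norm (t l) \<le> \<epsilon>"
    moreover from this(2) have "\<forall>l. norm (t l) \<le> \<epsilon>'" using that(1) by (meson order.trans)
    ultimately show "dist (itF F k x' t) ((f ^^ k) x') < \<delta>" using that(2) unfolding Good_def by blast
  qed
  have Gmono: "\<epsilon> \<le> \<epsilon>' \<Longrightarrow> G \<epsilon>' \<subseteq> G \<epsilon>" for \<epsilon> \<epsilon>'
    unfolding G_def using Goodmono by blast
  have Gcover: "\<exists>n. x \<in> G (1 / real (Suc n))" if x: "x \<in> Ws M f ?L" for x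
  proof -
    have xM: "x \<in> M" and lim: "(\<lambda>k. g k x) \<longlonglongrightarrow> 0" using x unfolding Ws_def g_def by auto
    have "eventually (\<lambda>k. g k x < \<delta>) sequentially" using lim \<delta> by (rule order_tendstoD)
    then obtain k where k: "g k x < \<delta>" unfolding eventually_sequentially by blast
    obtain \<eta> where \<eta>: "\<eta> > 0" "\<forall>x\<in>M. \<forall>t. (\<forall>l. norm (t l) \<le> \<eta>) \<longrightarrow> dist (itF F k x t) ((f ^^ k) x) < \<delta>"
      using close[OF Mc Fc FM f0 \<delta>, of k] by blast
    obtain N :: nat where N: "N > 0" "inverse (real N) < \<eta>"
      using ex_inverse_of_nat_less[OF \<eta>(1)] by blast
    define n where "n = N - 1"
    have "Suc n = N" using N(1) by (simp add: n_def)
    then have n: "inverse (real (Suc n)) < \<eta>" using N(2) by simp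
    have "Good k \<eta>" unfolding Good_def by (rule \<eta>(2))
    moreover have "1 / real (Suc n) \<le> \<eta>" using n by (simp add: divide_inverse)
    ultimately have "Good k (1 / real (Suc n))" using Goodmono by blast
    then show ?thesis using xM k unfolding G_def by blast
  qed
  have Gbasin: "x \<in> basin M F \<epsilon> (\<mu>e i \<epsilon>)" if e0: "0 < \<epsilon>" and e1: "\<epsilon> < 1" and e2: "\<epsilon> < \<epsilon>1"
    and x: "x \<in> G \<epsilon>" for x \<epsilon>
  proof -
    from x obtain k where xM: "x \<in> M" and gk: "Good k \<epsilon>" and gx: "g k x < \<delta>" unfolding G_def by blast
    have sm: "stat_meas M F \<epsilon> ?L U (\<mu>e i \<epsilon>)" by (rule st[OF e0 e2])
    then have P: "prob_space (\<mu>e i \<epsilon>)" and S: "sets (\<mu>e i \<epsilon>) = sets (Mborel M)"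
      and stat: "\<forall>y\<in>U. AE t in noise \<epsilon>. emp_conv M F y t (\<mu>e i \<epsilon>)"
      unfolding stat_meas_def by auto
    have "\<forall>t. (\<forall>l. norm (t l) \<le> \<epsilon>) \<longrightarrow> itF F k x t \<in> U"
    proof (intro allI impI)
      fix t :: "nat \<Rightarrow> 'n" assume t: "\<forall>l. norm (t l) \<le> \<epsilon>"
      have t1: "\<forall>l. norm (t l) < 1" using t e1 by (meson le_less_trans)
      have inM: "itF F k x t \<in> M" by (rule itF_in[OF FM xM t1])
      have d: "dist (itF F k x t) ((f ^^ k) x) < \<delta>" using gk xM t unfolding Good_def by blast
      have "infdist (itF F k x t) ?L \<le> infdist ((f ^^ k) x) ?L + dist (itF F k x t) ((f ^^ k) x)"
        by (rule infdist_triangle)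
      also have "\<dots> < 2 * \<delta>" using gx d unfolding g_def by simp
      finally show "itF F k x t \<in> U" by (rule \<delta>U[OF inM])
    qed
    then have "AE t in noise \<epsilon>. emp_conv M F x t (\<mu>e i \<epsilon>)"
      by (rule k_step[OF Mc P S Fc FM e0 e1 stat xM])
    then show ?thesis using xM unfolding basin_def by blast
  qed
  define b where "b = min 1 \<epsilon>1"
  have b: "b > 0" using \<epsilon>1 by (simp add: b_def)
  have part1: "\<forall>\<^sub>F \<epsilon> in at_right 0. Ws M f (\<Lambda> i) - basin M F \<epsilon> (\<mu>e i \<epsilon>) \<in> sets m"
    unfolding eventually_at_right[OF b]
  proof (intro exI[of _ b] conjI b allI impI)
    fix \<epsilon> :: real assume e0: "0 < \<epsilon>" and eb: "\<epsilon> < b"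
    have e1: "\<epsilon> < 1" and e2: "\<epsilon> < \<epsilon>1" using eb by (auto simp: b_def)
    have sm: "stat_meas M F \<epsilon> ?L U (\<mu>e i \<epsilon>)" by (rule st[OF e0 e2])
    then have P: "prob_space (\<mu>e i \<epsilon>)" and S: "sets (\<mu>e i \<epsilon>) = sets (Mborel M)"
      unfolding stat_meas_def by auto
    have "basin M F \<epsilon> (\<mu>e i \<epsilon>) \<in> sets (Mborel M)" by (rule basin_meas[OF Mc P S Fc FM e0 e1])
    then show "Ws M f (\<Lambda> i) - basin M F \<epsilon> (\<mu>e i \<epsilon>) \<in> sets m" using Wsm msets by auto
  qed
  define C where "C n = Ws M f ?L - G (1 / real (Suc n))" for n
  have Cm: "C n \<in> sets m" for n unfolding C_def msets using Wsm Gm by auto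
  have Cdec: "decseq C"
    unfolding decseq_def C_def
  proof (intro allI impI)
    fix p q :: nat assume "p \<le> q"
    then have "1 / real (Suc q) \<le> 1 / real (Suc p)" by (simp add: frac_le)
    then show "Ws M f ?L - G (1 / real (Suc q)) \<subseteq> Ws M f ?L - G (1 / real (Suc p))"
      using Gmono by blast
  qed
  have Cint: "(\<Inter>n. C n) = {}" unfolding C_def using Gcover by blast
  have Clim: "(\<lambda>n. measure m (C n)) \<longlonglongrightarrow> 0"
    using m.finite_Lim_measure_decseq[of C] Cm Cdec Cint by auto
  have part2: "((\<lambda>\<epsilon>. measure m (Ws M f (\<Lambda> i) - basin M F \<epsilon> (\<mu>e i \<epsilon>))) \<longlongrightarrow> 0) (at_right 0)"
    unfolding tendsto_iff
  proof (intro allI impI)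
    fix r :: real assume r: "r > 0"
    have "eventually (\<lambda>n. measure m (C n) < r) sequentially" using Clim r by (rule order_tendstoD)
    then obtain n where n: "measure m (C n) < r" unfolding eventually_sequentially by blast
    define b' where "b' = min b (1 / real (Suc n))"
    have b': "b' > 0" using b by (simp add: b'_def)
    show "\<forall>\<^sub>F \<epsilon> in at_right 0. dist (measure m (Ws M f (\<Lambda> i) - basin M F \<epsilon> (\<mu>e i \<epsilon>))) 0 < r"
      unfolding eventually_at_right[OF b']
    proof (intro exI[of _ b'] conjI b' allI impI)
      fix \<epsilon> :: real assume e0: "0 < \<epsilon>" and eb: "\<epsilon> < b'"
      have e1: "\<epsilon> < 1" and e2: "\<epsilon> < \<epsilon>1" and e3: "\<epsilon> \<le> 1 / real (Suc n)"
        using eb by (auto simp: b'_def b_def)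
      have sub: "Ws M f ?L - basin M F \<epsilon> (\<mu>e i \<epsilon>) \<subseteq> C n"
        unfolding C_def using Gbasin[OF e0 e1 e2] Gmono[OF e3] by blast
      have "measure m (Ws M f ?L - basin M F \<epsilon> (\<mu>e i \<epsilon>)) \<le> measure m (C n)"
        by (rule m.finite_measure_mono[OF sub Cm])
      then show "dist (measure m (Ws M f (\<Lambda> i) - basin M F \<epsilon> (\<mu>e i \<epsilon>))) 0 < r"
        using n by (simp add: dist_real_def)
    qed
  qed
  show ?thesis using part1 part2 by blast
qed


end
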